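(* Let $A$ be an alphabet. For all words $\mathbf a,\mathbf b,\mathbf c,\mathbf d\in A^\ast$, in the algebra $(A^\ast,\cdot,A^\ast)$: $$\mathbf a:\mathbf b::_m\mathbf c:\mathbf d\iff \exists\,\mathbf a_1,\mathbf a_2,\mathbf a_3,\mathbf b_1,\mathbf b_2,\mathbf b_3\in A^\ast:\ \mathbf a=\mathbf a_1\mathbf a_2\mathbf a_3,\ \mathbf b=\mathbf b_1\mathbf a_2\mathbf b_3,\ \mathbf c=\mathbf a_1\mathbf b_2\mathbf a_3,\ \mathbf d=\mathbf b_1\mathbf b_2\mathbf b_3.$$
   Context: $(A^\ast,\cdot,A^\ast)$ is the algebra whose universe is the set $A^\ast$ of all finite words over $A$ (including the empty word $\varepsilon$), with concatenation as binary operation and every word as a constant. A justification is a pair of terms $s\to t$ with the variables of $t$ among those of $s$; monolinear justifications are those where $s,t$ contain only one fixed variable $x$, occurring at most once in $s$ and at most once in $t$. $\uparrow^m(\mathbf a\to\mathbf b)$ is the set of monolinear justifications $s\to t$ with $\mathbf a=s(\mathbf o)$, $\mathbf b=t(\mathbf o)$ for some value $\mathbf o$ of $x$; $\uparrow^m(\mathbf a\to\mathbf b:\!\cdot\,\mathbf c\to\mathbf d):=\uparrow^m(\mathbf a\to\mathbf b)\cap\uparrow^m(\mathbf c\to\mathbf d)$. A monolinear justification is trivial if it lies in all sets $\uparrow^m(\mathbf a'\to\mathbf b':\!\cdot\,\mathbf c'\to\mathbf d')$. $\mathbf a\to\mathbf b:\!\cdot_m\,\mathbf c\to\mathbf d$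 holds iff either (i) all justifications in $\uparrow^m(\mathbf a\to\mathbf b)\cup\uparrow^m(\mathbf c\to\mathbf d)$ are trivial, or (ii) $J_{\mathbf d}:=\uparrow^m(\mathbf a\to\mathbf b:\!\cdot\,\mathbf c\to\mathbf d)$ contains a non-trivial justification and for every $\mathbf d'$, $J_{\mathbf d}\subseteq J_{\mathbf d'}$ implies $J_{\mathbf d'}$ contains a non-trivial justification and $J_{\mathbf d'}\subseteq J_{\mathbf d}$ (ignoring trivial justifications). $\mathbf a:\mathbf b::_m\mathbf c:\mathbf d$ iff $\mathbf a\to\mathbf b:\!\cdot_m\,\mathbf c\to\mathbf d$, $\mathbf b\to\mathbf a:\!\cdot_m\,\mathbf d\to\mathbf c$, $\mathbf c\to\mathbf d:\!\cdot_m\,\mathbf a\to\mathbf b$, $\mathbf d\to\mathbf c:\!\cdot_m\,\mathbf b\to\mathbf a$ all hold. *)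

theory Defs
  imports Main
begin

text \<open>Terms of the word algebra (A*, concatenation, every word a constant) in the
single fixed variable x.  Words over the alphabet are lists over the type 'a.\<close>

datatype 'a trm = X | C "'a list" | Cat "'a trm" "'a trm"

fun eval :: "'a trm \<Rightarrow> 'a list \<Rightarrow> 'a list" where
  "eval X o' = o'"
| "eval (C w) o' = w"
| "eval (Cat s t) o' = eval s o' @ eval t o'"

fun occ :: "'a trm \<Rightarrow> nat" where
  "occ X = 1"
| "occ (C w) = 0"
| "occ (Cat s t) = occ s + occ t"

definition monolinear :: "'a trm \<times> 'a trm \<Rightarrow> bool" where
  "monolinear j \<longleftrightarrow> occ (fst j) \<le> 1 \<and> occ (snd j) \<le> 1
      \<and> (occ (snd j) > 0 \<longrightarrow> occ (fst j) > 0)"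

definition up_m :: "'a list \<Rightarrow> 'a list \<Rightarrow> ('a trm \<times> 'a trm) set" where
  "up_m a b = {j. monolinear j \<and> (\<exists>o'. a = eval (fst j) o' \<and> b = eval (snd j) o')}"

definition up_m2 :: "'a list \<Rightarrow> 'a list \<Rightarrow> 'a list \<Rightarrow> 'a list \<Rightarrow> ('a trm \<times> 'a trm) set" where
  "up_m2 a b c d = up_m a b \<inter> up_m c d"

definition trivial_just :: "'a trm \<times> 'a trm \<Rightarrow> bool" where
  "trivial_just j \<longleftrightarrow> monolinear j \<and> (\<forall>a' b' c' d'. j \<in> up_m2 a' b' c' d')"

definition nontriv :: "('a trm \<times> 'a trm) set \<Rightarrow> ('a trm \<times> 'a trm) set" where
  "nontriv S = {j \<in> S. \<not> trivial_just j}"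

definition arrow_prop :: "'a list \<Rightarrow> 'a list \<Rightarrow> 'a list \<Rightarrow> 'a list \<Rightarrow> bool" where
  "arrow_prop a b c d \<longleftrightarrow>
     (\<forall>j \<in> up_m a b \<union> up_m c d. trivial_just j)
   \<or> (nontriv (up_m2 a b c d) \<noteq> {} \<and>
      (\<forall>d'. nontriv (up_m2 a b c d) \<subseteq> nontriv (up_m2 a b c d') \<longrightarrow>
              nontriv (up_m2 a b c d') \<noteq> {} \<and>
              nontriv (up_m2 a b c d') \<subseteq> nontriv (up_m2 a b c d)))"

definition analog_prop :: "'a list \<Rightarrow> 'a list \<Rightarrow> 'a list \<Rightarrow> 'a list \<Rightarrow> bool" where
  "analog_prop a b c d \<longleftrightarrow>
     arrow_prop a b c d \<and> arrow_prop b a d c \<and> arrow_prop c d a b \<and> arrow_prop d c b a"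

end

theory Submission
  imports Defs
begin

lemma occ0: "occ s = 0 \<Longrightarrow> eval s o1 = eval s o2"
  by (induction s) auto

lemma occ1: "occ s = 1 \<Longrightarrow> \<exists>u v. \<forall>o'. eval s o' = u @ o' @ v"
proof (induction s)
  case (Cat s1 s2)
  show ?case
  proof (cases "occ s1 = 1")
    case True
    then have "occ s2 = 0" using Cat.prems by simp
    from Cat.IH(1)[OF True] obtain u v where "\<forall>o'. eval s1 o' = u @ o' @ v" by blast
    then show ?thesis using occ0[OF \<open>occ s2 = 0\<close>]
      by (rule_tac x=u in exI, rule_tac x="v @ eval s2 []" in exI) (metis append.assoc eval.simps(3))
  next
    case False
    then have "occ s1 = 0" "occ s2 = 1" using Cat.prems by auto
    from Cat.IH(2)[OF \<open>occ s2 = 1\<close>] obtain u v where "\<forall>o'. eval s2 o' = u @ o' @ v" by blast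
    then show ?thesis using occ0[OF \<open>occ s1 = 0\<close>]
      by (rule_tac x="eval s1 [] @ u" in exI, rule_tac x="v" in exI) (metis append.assoc eval.simps(3))
  qed
next
  case X
  show ?case by (rule exI[of _ "[]"], rule exI[of _ "[]"]) simp
qed auto

lemma no_trivial: "\<not> trivial_just j"
proof
  assume "trivial_just j"
  then have "j \<in> up_m [] []" "j \<in> up_m [] [undefined]"
    unfolding trivial_just_def up_m2_def by blast+
  then have m: "monolinear j" and e1: "\<exists>o1. eval (fst j) o1 = [] \<and> eval (snd j) o1 = []"
    and e2: "\<exists>o2. eval (fst j) o2 = [] \<and> eval (snd j) o2 = [undefined]"
    unfolding up_m_def by (auto simp: eq_commute)
  from e1 e2 obtain o1 o2 where
    h: "eval (fst j) o1 = []" "eval (snd j) o1 = []" "eval (fst j) o2 = []" "eval (snd j) o2 = [undefined]"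
    by blast
  show False
  proof (cases "occ (fst j) = 0")
    case True
    then have "occ (snd j) = 0" using m unfolding monolinear_def by auto
    then show False using occ0[of "snd j" o1 o2] h by simp
  next
    case False
    then have "occ (fst j) = 1" using m unfolding monolinear_def by auto
    then obtain u v where "\<forall>o'. eval (fst j) o' = u @ o' @ v" using occ1 by blast
    then have "o1 = []" "o2 = []" using h by auto
    then show False using h by simp
  qed
qed

lemma nontriv_id[simp]: "nontriv S = S"
  unfolding nontriv_def using no_trivial by blast

definition dec :: "'a list \<Rightarrow> 'a list \<Rightarrow> 'a list \<Rightarrow> 'a list \<Rightarrow> bool" where
  "dec a b c d \<longleftrightarrow> (\<exists>a1 a2 a3 b1 b2 b3 :: 'a list.
        a = a1 @ a2 @ a3 \<and> b = b1 @ a2 @ b3 \<and> c = a1 @ b2 @ a3 \<and> d = b1 @ b2 @ b3)"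

lemma arrow_dec:
  assumes "a = a1 @ a2 @ a3" "b = b1 @ a2 @ b3" "c = a1 @ b2 @ a3" "d = b1 @ b2 @ b3"
  shows "arrow_prop a b c d"
proof -
  define j0 where "j0 = (Cat (C a1) (Cat X (C a3)), Cat (C b1) (Cat X (C b3)))"
  have mj: "monolinear j0" unfolding j0_def monolinear_def by simp
  have j0in: "j0 \<in> up_m2 a b c d"
    unfolding up_m2_def up_m_def using mj assms by (auto simp: j0_def)
  have "\<forall>d'. up_m2 a b c d \<subseteq> up_m2 a b c d' \<longrightarrow> d' = d"
  proof (intro allI impI)
    fix d'
    assume "up_m2 a b c d \<subseteq> up_m2 a b c d'"
    then have "j0 \<in> up_m c d'" using j0in unfolding up_m2_def by blast
    then obtain o' where "c = a1 @ o' @ a3" "d' = b1 @ o' @ b3"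
      unfolding up_m_def j0_def by auto
    then show "d' = d" using assms by simp
  qed
  then have "\<forall>d'. nontriv (up_m2 a b c d) \<subseteq> nontriv (up_m2 a b c d') \<longrightarrow>
              nontriv (up_m2 a b c d') \<noteq> {} \<and>
              nontriv (up_m2 a b c d') \<subseteq> nontriv (up_m2 a b c d)"
    using j0in by (metis empty_iff nontriv_id order_refl)
  moreover have "nontriv (up_m2 a b c d) \<noteq> {}" using j0in by auto
  ultimately show ?thesis unfolding arrow_prop_def by blast
qed

lemma up_cases:
  assumes "j \<in> up_m a b" "j \<in> up_m c d"
  shows "dec a b c d \<or> (b = d \<and> (a = c \<or> (\<exists>u v o1 o2. a = u @ o1 @ v \<and> c = u @ o2 @ v)))"
proof -
  from assms obtain o1 o2 where m: "monolinear j" and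
    h: "a = eval (fst j) o1" "b = eval (snd j) o1" "c = eval (fst j) o2" "d = eval (snd j) o2"
    unfolding up_m_def by auto
  show ?thesis
  proof (cases "occ (fst j) = 0")
    case True
    then have "occ (snd j) = 0" using m unfolding monolinear_def by auto
    then show ?thesis using occ0[of "snd j" o1 o2] occ0[OF True, of o1 o2] h by simp
  next
    case False
    then have s1: "occ (fst j) = 1" using m unfolding monolinear_def by auto
    then obtain u v where uv: "\<forall>o'. eval (fst j) o' = u @ o' @ v" using occ1 by blast
    show ?thesis
    proof (cases "occ (snd j) = 0")
      case True
      then show ?thesis using occ0[of "snd j" o1 o2] h uv by auto
    next
      case False
      then have "occ (snd j) = 1" using m unfolding monolinear_def by auto
      then obtain u' v' where uv': "\<forall>o'. eval (snd j) o' = u' @ o' @ v'" using occ1 by blast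
      have "dec a b c d" unfolding dec_def
        by (rule exI[of _ u], rule exI[of _ o1], rule exI[of _ v], rule exI[of _ u'],
            rule exI[of _ o2], rule exI[of _ v']) (simp add: uv uv' h)
      then show ?thesis by blast
    qed
  qed
qed

lemma dec_triv: "dec a b a b"
  unfolding dec_def by (rule exI[of _ a], rule exI[of _ "[]"], rule exI[of _ "[]"],
     rule exI[of _ b], rule exI[of _ "[]"], rule exI[of _ "[]"]) simp

lemma arrow_ne: "arrow_prop a b c d \<Longrightarrow> \<exists>j. j \<in> up_m a b \<and> j \<in> up_m c d"
proof -
  assume "arrow_prop a b c d"
  moreover have "(C a, C b) \<in> up_m a b" unfolding up_m_def monolinear_def by simp
  ultimately have "up_m2 a b c d \<noteq> {}" unfolding arrow_prop_def using no_trivial by auto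
  then show ?thesis unfolding up_m2_def by blast
qed

theorem mainTheorem12:
  fixes a b c d :: "'a list"
  shows "analog_prop a b c d \<longleftrightarrow>
    (\<exists>a1 a2 a3 b1 b2 b3 :: 'a list.
        a = a1 @ a2 @ a3 \<and> b = b1 @ a2 @ b3 \<and> c = a1 @ b2 @ a3 \<and> d = b1 @ b2 @ b3)"
proof
  assume A: "analog_prop a b c d"
  from A obtain j where j: "j \<in> up_m a b" "j \<in> up_m c d"
    unfolding analog_prop_def using arrow_ne by blast
  from A obtain j' where j': "j' \<in> up_m b a" "j' \<in> up_m d c"
    unfolding analog_prop_def using arrow_ne by blast
  from up_cases[OF j] have "dec a b c d \<or> b = d" by blast
  moreover
  { assume "b = d"
    from up_cases[OF j'] \<open>b = d\<close> have "dec b a b c \<or> a = c" by blast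
    then have "a = c" unfolding dec_def by auto
    then have "dec a b c d" using \<open>b = d\<close> dec_triv by simp }
  ultimately show "\<exists>a1 a2 a3 b1 b2 b3. a = a1 @ a2 @ a3 \<and> b = b1 @ a2 @ b3 \<and> c = a1 @ b2 @ a3 \<and> d = b1 @ b2 @ b3"
    unfolding dec_def by blast
next
  assume "\<exists>a1 a2 a3 b1 b2 b3. a = a1 @ a2 @ a3 \<and> b = b1 @ a2 @ b3 \<and> c = a1 @ b2 @ a3 \<and> d = b1 @ b2 @ b3"
  then obtain a1 a2 a3 b1 b2 b3 where h: "a = a1 @ a2 @ a3" "b = b1 @ a2 @ b3" "c = a1 @ b2 @ a3" "d = b1 @ b2 @ b3"
    by blast
  show "analog_prop a b c d" unfolding analog_prop_def
    using arrow_dec[OF h] arrow_dec[OF h(2,1,4,3)] arrow_dec[OF h(3,4,1,2)] arrow_dec[OF h(4,3,2,1)]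
    by (intro conjI)
qed

end
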